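(* Let $X,Y$ be real Banach spaces, $C\subseteq X$ a nonempty closed set, $f:X\to\mathbb{R}\cup\{+\infty\}$ and $g:X\to Y$. Let $x_0$ be a local solution of the problem $\min\{f(x)\,;\ g(x)=0,\ x\in C\}$. Assume: (H_f) $f$ is Gâteaux differentiable at $x_0$ and there exist $r>0$ and $K_f>0$ such that $f(x)-f(x')\le K_f\|x-x'\|_X$ for all $x,x'\in B_X(x_0,r)$; (H_g) $g$ is Gâteaux differentiable at $x_0$; and that the system "$x\in C$, $g(x)=0$" is calm at $x_0$, i.e. there exist $a>0$ and $s>0$ such that $d_{g^{-1}(0)\cap C}(x)\le a\|g(x)\|_Y$ for all $x\in B_X(x_0,s)\cap C$. Then: (i) if $x_0\in\operatorname{int}(C)$, there exists $y^*\in Y^*$ with $\|y^*\|_{Y^*}\le K_f a$ such that $Df(x_0)+D^*g(x_0)y^*=0$; (ii) if $g$ is locally Lipschitz around $x_0$ with constant $K_g>0$, then $$Df(x_0)h+K_fa\|Dg(x_0)h\|_Y+K_f(1+K_ga)\,d^-_C(x_0;h)\ge 0\quad\forall h\in X;$$ in particular there exists $y^*\in Y^*$ with $\|y^*\|_{Y^*}\le K_fa$ such that $0\in Df(x_0)+D^*g(x_0)y^*+N_C(x_0)$. If in addition $K(C,x_0)$ is convex, then there exists $y^*\in Y^*$ with $\|y^*\|_{Y^*}\le K_fa$ such that $0\in Df(x_0)+D^*g(x_0)y^*+(K(C,x_0))^0$.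
   Context: A local solution $x_0$ is a feasible point ($x_0\in C$, $g(x_0)=0$) such that $f(x_0)\le f(x)$ for all feasible $x$ in some neighbourhood of $x_0$. $B_X(x,r)$ is the closed ball. A map $\varphi$ is Gâteaux differentiable at $x_0$ if there is a bounded linear operator $D\varphi(x_0)$ with $\lim_{\tau\to0^+}(\varphi(x_0+\tau h)-\varphi(x_0))/\tau=D\varphi(x_0)h$ for all $h$; $D^*g(x_0):Y^*\to X^*$ is the adjoint of $Dg(x_0)$. For a nonempty $A\subseteq X$, $d_A(x)=\inf_{a\in A}\|x-a\|_X$. For $x\in A$: the lower Dini derivative is $d^-_A(x;h)=\liminf_{\tau\to0^+}d_A(x+\tau h)/\tau$; the contingent cone is $K(A,x)=\{h\in X: d^-_A(x;h)=0\}$; the Clarke tangent cone is $T_A(x)=\{h\in X:\lim_{y\to x,\,y\in A,\,\tau\to0^+}d_A(y+\tau h)/\tau=0\}$; the Clarke normal cone is $N_A(x)=T_A(x)^0$, where for a cone $\mathcal K$, $\mathcal K^0=\{x^*\in X^*:\langle x^*,h\rangle\le0\ \forall h\in\mathcal K\}$. *)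

theory Defs
  imports "HOL-Analysis.Analysis"
begin

definition gateaux_at :: "('a::real_normed_vector \<Rightarrow> 'b::real_normed_vector) \<Rightarrow> 'a \<Rightarrow> ('a \<Rightarrow>\<^sub>L 'b) \<Rightarrow> bool" where
  "gateaux_at g x D \<longleftrightarrow>
     (\<forall>h. ((\<lambda>\<tau>. (g (x + \<tau> *\<^sub>R h) - g x) /\<^sub>R \<tau>) \<longlongrightarrow> blinfun_apply D h) (at_right 0))"

definition gateaux_at_ereal :: "('a::real_normed_vector \<Rightarrow> ereal) \<Rightarrow> 'a \<Rightarrow> ('a \<Rightarrow>\<^sub>L real) \<Rightarrow> bool" where
  "gateaux_at_ereal f x D \<longleftrightarrow> \<bar>f x\<bar> \<noteq> \<infinity> \<and>
     (\<forall>h. ((\<lambda>\<tau>. (f (x + \<tau> *\<^sub>R h) - f x) / ereal \<tau>) \<longlongrightarrow> ereal (blinfun_apply D h)) (at_right 0))"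

definition lower_dini_dist :: "'a::real_normed_vector set \<Rightarrow> 'a \<Rightarrow> 'a \<Rightarrow> ereal" where
  "lower_dini_dist A x h = Liminf (at_right 0) (\<lambda>\<tau>. ereal (infdist (x + \<tau> *\<^sub>R h) A / \<tau>))"

definition contingent_cone :: "'a::real_normed_vector set \<Rightarrow> 'a \<Rightarrow> 'a set" where
  "contingent_cone A x = {h. lower_dini_dist A x h = 0}"

text \<open>Clarke tangent cone: limit as y \<rightarrow> x with y \<in> A (y = x allowed) and \<tau> \<rightarrow> 0+.\<close>
definition clarke_tangent_cone :: "'a::real_normed_vector set \<Rightarrow> 'a \<Rightarrow> 'a set" where
  "clarke_tangent_cone A x = {h.
     ((\<lambda>(y, \<tau>). infdist (y + \<tau> *\<^sub>R h) A / \<tau>) \<longlongrightarrow> 0)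
       ((inf (nhds x) (principal A)) \<times>\<^sub>F at_right 0)}"

definition polar_cone :: "'a::real_normed_vector set \<Rightarrow> ('a \<Rightarrow>\<^sub>L real) set" where
  "polar_cone K = {xs. \<forall>h\<in>K. blinfun_apply xs h \<le> 0}"

definition clarke_normal_cone :: "'a::real_normed_vector set \<Rightarrow> 'a \<Rightarrow> ('a \<Rightarrow>\<^sub>L real) set" where
  "clarke_normal_cone A x = polar_cone (clarke_tangent_cone A x)"

definition local_solution ::
  "('a::real_normed_vector \<Rightarrow> ereal) \<Rightarrow> ('a \<Rightarrow> 'b::real_normed_vector) \<Rightarrow> 'a set \<Rightarrow> 'a \<Rightarrow> bool" where
  "local_solution f g C x0 \<longleftrightarrow> x0 \<in> C \<and> g x0 = 0 \<and>
     (\<exists>\<epsilon>>0. \<forall>x\<in>C. g x = 0 \<and> x \<in> ball x0 \<epsilon> \<longrightarrow> f x0 \<le> f x)"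

end

theory Submission
  imports Defs
begin

definition sublin :: "('b::real_vector \<Rightarrow> real) \<Rightarrow> bool" where
  "sublin q \<longleftrightarrow> (\<forall>x y. q (x+y) \<le> q x + q y) \<and> (\<forall>t>0. \<forall>x. q (t *\<^sub>R x) = t * q x)"

lemma hom_from_ge:
  fixes q :: "'b::real_vector \<Rightarrow> real"
  assumes "\<And>t x. t > 0 \<Longrightarrow> t * q x \<le> q (t *\<^sub>R x)" "t>0"
  shows "q (t *\<^sub>R x) = t * q x"
proof -
  have "(1/t) * q (t *\<^sub>R x) \<le> q ((1/t) *\<^sub>R (t *\<^sub>R x))" by (rule assms(1)) (use \<open>t>0\<close> in simp)
  then have "(1/t) * q (t *\<^sub>R x) \<le> q x" using \<open>t>0\<close> by simp
  then have "q (t *\<^sub>R x) \<le> t * q x" using \<open>t>0\<close> by (simp add: field_simps)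
  moreover have "t * q x \<le> q (t *\<^sub>R x)" using assms by blast
  ultimately show ?thesis by linarith
qed

lemma sublin_zero:
  assumes "sublin q" shows "q 0 = 0"
proof -
  have h: "\<forall>t>0. \<forall>x. q (t *\<^sub>R x) = t * q x" using assms sublin_def by blast
  have "q ((2::real) *\<^sub>R 0) = 2 * q 0" using h[rule_format, of 2 0] by simp
  then show ?thesis by simp
qed

lemma sublin_add: "sublin q \<Longrightarrow> q (x+y) \<le> q x + q y"
  unfolding sublin_def by blast

lemma sublin_hom: "sublin q \<Longrightarrow> t > 0 \<Longrightarrow> q (t *\<^sub>R x) = t * q x"
  unfolding sublin_def by blast

lemma sublin_neg: assumes "sublin q" shows "0 \<le> q x + q (-x)"
proof -
  have "q (x + -x) \<le> q x + q (-x)" using sublin_add[OF assms] .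
  then show ?thesis using sublin_zero[OF assms] by simp
qed

lemma sublin_hom0: "sublin q \<Longrightarrow> t \<ge> 0 \<Longrightarrow> q (t *\<^sub>R x) = t * q x"
  using sublin_zero[of q] unfolding sublin_def
  by (cases "t = 0") auto

lemma chain_bound:
  fixes p :: "'b::real_vector \<Rightarrow> real"
  defines "A \<equiv> {q. sublin q \<and> (\<forall>x. q x \<le> p x)}"
  assumes p: "sublin p" and C: "C \<in> Chains (relation_of (\<lambda>q1 q2. \<forall>x. q2 x \<le> q1 x) A)"
  shows "\<exists>u\<in>A. \<forall>q\<in>C. \<forall>x. u x \<le> q x"
proof (cases "C = {}")
  case True
  then show ?thesis using p unfolding A_def by auto
next
  case False
  have CA: "C \<subseteq> A" using C unfolding Chains_def relation_of_def by auto
  have cmp2: "\<exists>q\<in>C. (\<forall>x. q x \<le> q1 x) \<and> (\<forall>x. q x \<le> q2 x)" if "q1 \<in> C" "q2 \<in> C" for q1 q2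
  proof -
    have "(\<forall>x. q2 x \<le> q1 x) \<or> (\<forall>x. q1 x \<le> q2 x)"
      using C that unfolding Chains_def relation_of_def by auto
    then show ?thesis
    proof
      assume "\<forall>x. q2 x \<le> q1 x" then show ?thesis using that(2) by auto
    next
      assume "\<forall>x. q1 x \<le> q2 x" then show ?thesis using that(1) by auto
    qed
  qed
  define u where "u x = (INF q\<in>C. q x)" for x
  have bdd: "bdd_below ((\<lambda>q. q x) ` C)" for x
  proof (rule bdd_belowI2)
    fix q assume "q \<in> C"
    then have "sublin q" "q (-x) \<le> p (-x)" using CA unfolding A_def by auto
    then show "- p (-x) \<le> q x" using sublin_neg[of q x] by linarith
  qed
  have low: "u x \<le> q x" if "q \<in> C" for q x
    unfolding u_def by (rule cINF_lower[OF bdd that])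
  have sa: "u (x+y) \<le> u x + u y" for x y
  proof -
    have "u (x+y) \<le> q1 x + q2 y" if h12: "q1 \<in> C" "q2 \<in> C" for q1 q2
    proof -
      obtain q where q: "q \<in> C" "\<forall>x. q x \<le> q1 x" "\<forall>x. q x \<le> q2 x" using cmp2[OF h12] by blast
      have "sublin q" using q CA unfolding A_def by auto
      then have "q (x+y) \<le> q x + q y" unfolding sublin_def by blast
      then show ?thesis using low[OF q(1), of "x+y"] q by (meson add_mono order_trans)
    qed
    then have "u (x+y) - q2 y \<le> u x" if "q2 \<in> C" for q2
      unfolding u_def[of x] using False that
      by (intro cINF_greatest) (auto simp: algebra_simps)
    then have "u (x+y) - u x \<le> u y"
      unfolding u_def[of y] using False
      by (intro cINF_greatest) (auto simp: algebra_simps)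
    then show ?thesis by simp
  qed
  have hg: "t * u x \<le> u (t *\<^sub>R x)" if "t > 0" for t x
  proof -
    have "t * u x \<le> q (t *\<^sub>R x)" if "q \<in> C" for q
    proof -
      have "sublin q" using that CA unfolding A_def by auto
      then have "q (t *\<^sub>R x) = t * q x" using \<open>t>0\<close> unfolding sublin_def by blast
      then show ?thesis using low[OF that, of x] \<open>t>0\<close> by simp
    qed
    then show ?thesis unfolding u_def[of "t *\<^sub>R x"] using False by (intro cINF_greatest) auto
  qed
  have "sublin u" unfolding sublin_def using sa hom_from_ge[of u, OF hg] by blast
  moreover have "u x \<le> p x" for x
  proof -
    obtain q where "q \<in> C" using False by blast
    then have "q x \<le> p x" using CA unfolding A_def by blast
    then show ?thesis using low[OF \<open>q \<in> C\<close>, of x] by linarith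
  qed
  ultimately show ?thesis using low unfolding A_def by blast
qed

lemma minimal_linear:
  fixes m :: "'b::real_vector \<Rightarrow> real"
  assumes m: "sublin m"
    and mini: "\<And>q. sublin q \<Longrightarrow> (\<forall>x. q x \<le> m x) \<Longrightarrow> q = m"
  shows "m (x + y) = m x + m y"
proof -
  define qy where "qy x = (INF t\<in>{0::real..}. m (x + t *\<^sub>R y) - t * m y)" for x
  have bdd: "bdd_below ((\<lambda>t. m (x + t *\<^sub>R y) - t * m y) ` {0..})" for x
  proof (rule bdd_belowI2)
    fix t :: real assume "t \<in> {0..}"
    then have "m (t *\<^sub>R y) = t * m y" using sublin_hom0[OF m] by auto
    moreover have "m ((x + t *\<^sub>R y) + (-x)) \<le> m (x + t *\<^sub>R y) + m (-x)"
      using sublin_add[OF m] .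
    then have "m (t *\<^sub>R y) \<le> m (x + t *\<^sub>R y) + m (-x)" by simp
    ultimately show "- m (-x) \<le> m (x + t *\<^sub>R y) - t * m y" by linarith
  qed
  have low: "qy x \<le> m (x + t *\<^sub>R y) - t * m y" if "t \<ge> 0" for t x
    unfolding qy_def using that bdd by (intro cINF_lower) auto
  have sa: "qy (x1+x2) \<le> qy x1 + qy x2" for x1 x2
  proof -
    have "qy (x1+x2) \<le> (m (x1 + t1 *\<^sub>R y) - t1 * m y) + (m (x2 + t2 *\<^sub>R y) - t2 * m y)"
      if "t1 \<ge> 0" "t2 \<ge> 0" for t1 t2
    proof -
      have "qy (x1+x2) \<le> m ((x1+x2) + (t1+t2) *\<^sub>R y) - (t1+t2) * m y" using low that by simp
      moreover have "m ((x1+x2) + (t1+t2) *\<^sub>R y) \<le> m (x1 + t1 *\<^sub>R y) + m (x2 + t2 *\<^sub>R y)"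
        using sublin_add[OF m, of "x1 + t1 *\<^sub>R y" "x2 + t2 *\<^sub>R y"] by (simp add: algebra_simps)
      ultimately show ?thesis by (simp add: algebra_simps)
    qed
    then have "qy (x1+x2) - (m (x2 + t2 *\<^sub>R y) - t2 * m y) \<le> qy x1" if "t2 \<ge> 0" for t2
      unfolding qy_def[of x1] using that
      by (intro cINF_greatest) (auto simp: algebra_simps)
    then have "qy (x1+x2) - qy x1 \<le> qy x2"
      unfolding qy_def[of x2]
      by (intro cINF_greatest) (auto simp: algebra_simps)
    then show ?thesis by simp
  qed
  have hg: "s * qy x \<le> qy (s *\<^sub>R x)" if "s > 0" for s x
  proof -
    have "s * qy x \<le> m (s *\<^sub>R x + t *\<^sub>R y) - t * m y" if "t \<ge> 0" for t
    proof -
      have "m (s *\<^sub>R x + t *\<^sub>R y) = m (s *\<^sub>R (x + (t/s) *\<^sub>R y))"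
        using \<open>s>0\<close> by (simp add: scaleR_add_right)
      also have "\<dots> = s * m (x + (t/s) *\<^sub>R y)" using m \<open>s>0\<close> unfolding sublin_def by blast
      finally have e: "m (s *\<^sub>R x + t *\<^sub>R y) = s * m (x + (t/s) *\<^sub>R y)" .
      have "qy x \<le> m (x + (t/s) *\<^sub>R y) - (t/s) * m y" by (rule low) (use that \<open>s>0\<close> in simp)
      then have "s * qy x \<le> s * (m (x + (t/s) *\<^sub>R y) - (t/s) * m y)" using \<open>s>0\<close> by simp
      also have "\<dots> = m (s *\<^sub>R x + t *\<^sub>R y) - t * m y" using e \<open>s>0\<close> by (simp add: algebra_simps)
      finally show ?thesis .
    qed
    then show ?thesis unfolding qy_def[of "s *\<^sub>R x"] by (intro cINF_greatest) auto
  qed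
  have "sublin qy" unfolding sublin_def using sa hom_from_ge[of qy, OF hg] by blast
  moreover have "qy x \<le> m x" for x using low[of 0 x] by simp
  ultimately have "qy = m" using mini by blast
  then have "m x \<le> m (x + y) - m y" using low[of 1 x] by simp
  moreover have "m (x + y) \<le> m x + m y" using m unfolding sublin_def by blast
  ultimately show ?thesis by linarith
qed

lemma hahn_banach_sublin:
  fixes p :: "'b::real_vector \<Rightarrow> real"
  assumes p: "sublin p"
  shows "\<exists>l. linear l \<and> (\<forall>x. l x \<le> p x)"
proof -
  define A where "A = {q. sublin q \<and> (\<forall>x. q x \<le> p x)}"
  define P where "P = (\<lambda>(q1::'b\<Rightarrow>real) q2. \<forall>x. q2 x \<le> q1 x)"
  have po: "partial_order_on A (relation_of P A)"
    unfolding partial_order_on_def preorder_on_def refl_on_def trans_def antisym_def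
      relation_of_def P_def
    apply (auto intro: order_trans)
    apply (rule ext)
    by (meson order_antisym)
  obtain m where mA: "m \<in> A" and mm: "\<forall>a\<in>A. P m a \<longrightarrow> a = m"
    using predicate_Zorn[OF po] chain_bound[OF p] unfolding A_def P_def by blast
  have sm: "sublin m" using mA unfolding A_def by auto
  have add: "m (x + y) = m x + m y" for x y
  proof (rule minimal_linear[OF sm])
    fix q assume "sublin q" "\<forall>x. q x \<le> m x"
    moreover then have "q \<in> A" using mA unfolding A_def by (auto intro: order_trans)
    ultimately show "q = m" using mm unfolding P_def by blast
  qed
  have neg: "m (-x) = - m x" for x using add[of x "-x"] sublin_zero[OF sm] by simp
  have sc: "m (t *\<^sub>R x) = t * m x" for t x
  proof (cases "t \<ge> 0")
    case True then show ?thesis using sublin_hom0[OF sm] by blast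
  next
    case False
    then have "m (t *\<^sub>R x) = m (- ((-t) *\<^sub>R x))" by simp
    also have "\<dots> = - ((-t) * m x)" using neg sublin_hom0[OF sm, of "-t" x] False by simp
    finally show ?thesis by simp
  qed
  have "linear m" by (rule linearI) (use add sc in auto)
  then show ?thesis using mA unfolding A_def by blast
qed

lemma infdist_approx:
  assumes "A \<noteq> {}" "e > 0"
  shows "\<exists>z\<in>A. dist x z < infdist x A + e"
proof -
  have bdd: "bdd_below ((\<lambda>a. dist x a) ` A)" by (rule bdd_belowI2[of _ 0]) auto
  have "(INF a\<in>A. dist x a) < infdist x A + e" using assms infdist_notempty[OF assms(1), of x] by simp
  then show ?thesis using cINF_less_iff[OF assms(1) bdd] by blast
qed

lemma dual_cone_ext:
  fixes A :: "'a::real_normed_vector \<Rightarrow>\<^sub>L 'b::real_normed_vector" and \<phi> :: "'a \<Rightarrow>\<^sub>L real"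
  assumes c: "c \<ge> 0" and K0: "0 \<in> K" and Kadd: "\<And>h1 h2. h1 \<in> K \<Longrightarrow> h2 \<in> K \<Longrightarrow> h1 + h2 \<in> K"
    and Ksc: "\<And>t h. t > 0 \<Longrightarrow> h \<in> K \<Longrightarrow> t *\<^sub>R h \<in> K"
    and ineq: "\<And>h. h \<in> K \<Longrightarrow> blinfun_apply \<phi> h + c * norm (blinfun_apply A h) \<ge> 0"
  shows "\<exists>ys::'b \<Rightarrow>\<^sub>L real. norm ys \<le> c \<and> (\<forall>h\<in>K. blinfun_apply \<phi> h + blinfun_apply ys (blinfun_apply A h) \<ge> 0)"
proof -
  define \<psi> where "\<psi> y h = c * norm (y + blinfun_apply A h) + blinfun_apply \<phi> h" for y h
  define p where "p y = (INF h\<in>K. \<psi> y h)" for y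
  have Kne: "K \<noteq> {}" using K0 by blast
  have lowb: "- c * norm y \<le> \<psi> y h" if "h \<in> K" for y h
  proof -
    have "norm (blinfun_apply A h) - norm y \<le> norm (y + blinfun_apply A h)"
      by (metis add.commute norm_diff_ineq)
    then have "c * (norm (blinfun_apply A h) - norm y) \<le> c * norm (y + blinfun_apply A h)"
      using c by (rule mult_left_mono)
    then show ?thesis using ineq[OF that] unfolding \<psi>_def by (simp add: algebra_simps)
  qed
  have bdd: "bdd_below ((\<psi> y) ` K)" for y
    by (rule bdd_belowI2[of _ "- c * norm y"]) (use lowb in auto)
  have low: "p y \<le> \<psi> y h" if "h \<in> K" for y h
    unfolding p_def by (rule cINF_lower[OF bdd that])
  have pge: "- c * norm y \<le> p y" for y
    unfolding p_def using Kne lowb by (intro cINF_greatest) auto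
  have ple: "p y \<le> c * norm y" for y using low[OF K0, of y] unfolding \<psi>_def by simp
  have pA: "p (- blinfun_apply A h) \<le> blinfun_apply \<phi> h" if "h \<in> K" for h
    using low[OF that, of "- blinfun_apply A h"] unfolding \<psi>_def by simp
  have sa: "p (y1 + y2) \<le> p y1 + p y2" for y1 y2
  proof -
    have "p (y1 + y2) \<le> \<psi> y1 h1 + \<psi> y2 h2" if "h1 \<in> K" "h2 \<in> K" for h1 h2
    proof -
      have "p (y1 + y2) \<le> \<psi> (y1 + y2) (h1 + h2)" using low[OF Kadd[OF that]] .
      also have "\<dots> \<le> \<psi> y1 h1 + \<psi> y2 h2"
      proof -
        have "norm ((y1 + y2) + blinfun_apply A (h1 + h2)) \<le> norm (y1 + blinfun_apply A h1) + norm (y2 + blinfun_apply A h2)"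
        proof -
          have "(y1 + y2) + blinfun_apply A (h1 + h2) = (y1 + blinfun_apply A h1) + (y2 + blinfun_apply A h2)"
            by (simp add: blinfun.add_right algebra_simps)
          then show ?thesis using norm_triangle_ineq by metis
        qed
        then have "c * norm ((y1 + y2) + blinfun_apply A (h1 + h2)) \<le> c * (norm (y1 + blinfun_apply A h1) + norm (y2 + blinfun_apply A h2))"
          using c by (rule mult_left_mono)
        then show ?thesis unfolding \<psi>_def by (simp add: blinfun.add_right algebra_simps)
      qed
      finally show ?thesis .
    qed
    then have "p (y1 + y2) - \<psi> y2 h2 \<le> p y1" if "h2 \<in> K" for h2
      unfolding p_def[of y1] using that Kne
      by (intro cINF_greatest) (auto simp: algebra_simps)
    then have "p (y1 + y2) - p y1 \<le> p y2"
      unfolding p_def[of y2] using Kne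
      by (intro cINF_greatest) (auto simp: algebra_simps)
    then show ?thesis by simp
  qed
  have hg: "t * p y \<le> p (t *\<^sub>R y)" if "t > 0" for t y
  proof -
    have "t * p y \<le> \<psi> (t *\<^sub>R y) h" if "h \<in> K" for h
    proof -
      have hK: "(1/t) *\<^sub>R h \<in> K" using Ksc \<open>t>0\<close> that by simp
      have "t * p y \<le> t * \<psi> y ((1/t) *\<^sub>R h)" using low[OF hK, of y] \<open>t>0\<close> by simp
      also have "\<dots> = \<psi> (t *\<^sub>R y) h"
      proof -
        have "t *\<^sub>R (y + blinfun_apply A ((1/t) *\<^sub>R h)) = t *\<^sub>R y + blinfun_apply A h"
          using \<open>t>0\<close> by (simp add: blinfun.scaleR_right scaleR_add_right)
        then have "t * norm (y + blinfun_apply A ((1/t) *\<^sub>R h)) = norm (t *\<^sub>R y + blinfun_apply A h)"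
          using \<open>t>0\<close> by (metis abs_of_pos norm_scaleR)
        then show ?thesis unfolding \<psi>_def using \<open>t>0\<close>
          by (simp add: blinfun.scaleR_right algebra_simps)
      qed
      finally show ?thesis .
    qed
    then show ?thesis unfolding p_def[of "t *\<^sub>R y"] using Kne by (intro cINF_greatest) auto
  qed
  have "sublin p" unfolding sublin_def using sa hom_from_ge[of p, OF hg] by blast
  then obtain l where l: "linear l" "\<And>y. l y \<le> p y" using hahn_banach_sublin by blast
  have lb: "norm (l y) \<le> norm y * c" for y
  proof -
    have "l y \<le> c * norm y" using l(2)[of y] ple[of y] by linarith
    moreover have "- l y \<le> c * norm y" using l(2)[of "-y"] ple[of "-y"] linear_neg[OF l(1), of y] by simp
    ultimately show ?thesis by (simp add: abs_le_iff mult.commute)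
  qed
  have bl: "bounded_linear l"
    by (rule bounded_linear_intro[where K=c]) (use l(1) lb in \<open>auto simp: linear_add linear_scale\<close>)
  define ys where "ys = Blinfun l"
  have ysa: "blinfun_apply ys = l" unfolding ys_def using bl by (simp add: bounded_linear_Blinfun_apply)
  have "norm ys \<le> c" using c by (rule norm_blinfun_bound) (use lb ysa in \<open>simp add: mult.commute\<close>)
  moreover have "blinfun_apply \<phi> h + blinfun_apply ys (blinfun_apply A h) \<ge> 0" if "h \<in> K" for h
  proof -
    have "l (- blinfun_apply A h) \<le> blinfun_apply \<phi> h" using l(2) pA[OF that] order_trans by blast
    then show ?thesis using linear_neg[OF l(1)] ysa by simp
  qed
  ultimately show ?thesis by blast
qed

lemma clarke_iff:
  fixes A :: "'a::real_normed_vector set"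
  shows "h \<in> clarke_tangent_cone A x \<longleftrightarrow>
    (\<forall>e>0. \<exists>d>0. \<exists>b>0. \<forall>y\<in>A. dist y x < d \<longrightarrow> (\<forall>\<tau>. 0 < \<tau> \<and> \<tau> < b \<longrightarrow> infdist (y + \<tau> *\<^sub>R h) A / \<tau> < e))"
    (is "_ \<longleftrightarrow> ?R")
proof -
  have "h \<in> clarke_tangent_cone A x \<longleftrightarrow>
     (\<forall>e>0. eventually (\<lambda>(y,\<tau>). \<bar>infdist (y + \<tau> *\<^sub>R h) A / \<tau>\<bar> < e) ((inf (nhds x) (principal A)) \<times>\<^sub>F at_right 0))"
    unfolding clarke_tangent_cone_def tendsto_iff by (simp add: case_prod_unfold)
  also have "\<dots> \<longleftrightarrow> ?R"
  proof (intro iffI allI impI)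
    fix e :: real assume H: "\<forall>e>0. eventually (\<lambda>(y,\<tau>). \<bar>infdist (y + \<tau> *\<^sub>R h) A / \<tau>\<bar> < e) ((inf (nhds x) (principal A)) \<times>\<^sub>F at_right 0)"
      and e: "e > 0"
    obtain Pf Pg where P: "eventually Pf (inf (nhds x) (principal A))" "eventually Pg (at_right 0)"
      "\<forall>y \<tau>. Pf y \<longrightarrow> Pg \<tau> \<longrightarrow> \<bar>infdist (y + \<tau> *\<^sub>R h) A / \<tau>\<bar> < e"
      using H e unfolding eventually_prod_filter by fastforce
    obtain d where d: "d > 0" "\<forall>y. dist y x < d \<longrightarrow> y \<in> A \<longrightarrow> Pf y"
      using P(1) unfolding eventually_inf_principal eventually_nhds_metric by blast
    obtain b where b: "b > 0" "\<forall>\<tau>>0. \<tau> < b \<longrightarrow> Pg \<tau>"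
      using P(2) unfolding eventually_at_right_field by auto
    show "\<exists>d>0. \<exists>b>0. \<forall>y\<in>A. dist y x < d \<longrightarrow> (\<forall>\<tau>. 0 < \<tau> \<and> \<tau> < b \<longrightarrow> infdist (y + \<tau> *\<^sub>R h) A / \<tau> < e)"
      using d b P(3) by (meson abs_less_iff)
  next
    fix e :: real assume R: ?R and e: "e > 0"
    obtain d b where db: "d > 0" "b > 0" "\<forall>y\<in>A. dist y x < d \<longrightarrow> (\<forall>\<tau>. 0 < \<tau> \<and> \<tau> < b \<longrightarrow> infdist (y + \<tau> *\<^sub>R h) A / \<tau> < e)"
      using R e by blast
    have "eventually (\<lambda>y. y \<in> A \<and> dist y x < d) (inf (nhds x) (principal A))"
      unfolding eventually_inf_principal eventually_nhds_metric using db by blast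
    moreover have "eventually (\<lambda>\<tau>. 0 < \<tau> \<and> \<tau> < b) (at_right (0::real))"
      unfolding eventually_at_right_field using db by blast
    moreover have "\<forall>y \<tau>. (y \<in> A \<and> dist y x < d) \<longrightarrow> (0 < \<tau> \<and> \<tau> < b) \<longrightarrow> \<bar>infdist (y + \<tau> *\<^sub>R h) A / \<tau>\<bar> < e"
    proof (intro allI impI)
      fix y \<tau> assume y: "y \<in> A \<and> dist y x < d" and t: "0 < \<tau> \<and> \<tau> < b"
      then have "infdist (y + \<tau> *\<^sub>R h) A / \<tau> < e" using db(3) by blast
      moreover have "0 \<le> infdist (y + \<tau> *\<^sub>R h) A / \<tau>" by (intro divide_nonneg_pos infdist_nonneg) (use t in auto)
      ultimately show "\<bar>infdist (y + \<tau> *\<^sub>R h) A / \<tau>\<bar> < e" by simp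
    qed
    ultimately show "eventually (\<lambda>(y,\<tau>). \<bar>infdist (y + \<tau> *\<^sub>R h) A / \<tau>\<bar> < e) ((inf (nhds x) (principal A)) \<times>\<^sub>F at_right 0)"
      unfolding eventually_prod_filter by blast
  qed
  finally show ?thesis .
qed

lemma clarke_zero: "(0::'a::real_normed_vector) \<in> clarke_tangent_cone A x"
  unfolding clarke_iff by (auto intro!: exI[of _ 1])

lemma clarke_scale:
  fixes A :: "'a::real_normed_vector set"
  assumes h: "h \<in> clarke_tangent_cone A x" and t: "t > 0"
  shows "t *\<^sub>R h \<in> clarke_tangent_cone A x"
  unfolding clarke_iff
proof (intro allI impI)
  fix e :: real assume e: "e > 0"
  obtain d b where db: "d > 0" "b > 0" "\<forall>y\<in>A. dist y x < d \<longrightarrow> (\<forall>\<tau>. 0 < \<tau> \<and> \<tau> < b \<longrightarrow> infdist (y + \<tau> *\<^sub>R h) A / \<tau> < e / t)"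
  proof -
    have pos: "e / t > 0" using e t by simp
    have H: "\<forall>e>0. \<exists>d>0. \<exists>b>0. \<forall>y\<in>A. dist y x < d \<longrightarrow> (\<forall>\<tau>. 0 < \<tau> \<and> \<tau> < b \<longrightarrow> infdist (y + \<tau> *\<^sub>R h) A / \<tau> < e)"
      using h unfolding clarke_iff .
    show ?thesis using H[rule_format, OF pos] that by blast
  qed
  have key: "\<forall>y\<in>A. dist y x < d \<longrightarrow> (\<forall>\<tau>. 0 < \<tau> \<and> \<tau> < b / t \<longrightarrow> infdist (y + \<tau> *\<^sub>R (t *\<^sub>R h)) A / \<tau> < e)"
  proof (intro ballI impI allI)
    fix y \<tau> assume y: "y \<in> A" "dist y x < d" and \<tau>: "0 < \<tau> \<and> \<tau> < b / t"
    have "0 < t * \<tau>" "t * \<tau> < b" using \<tau> t by (auto simp: field_simps)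
    then have "infdist (y + (t * \<tau>) *\<^sub>R h) A / (t * \<tau>) < e / t" using db y by blast
    then have "infdist (y + (t * \<tau>) *\<^sub>R h) A / \<tau> < e" using t \<tau> by (simp add: field_simps)
    then show "infdist (y + \<tau> *\<^sub>R (t *\<^sub>R h)) A / \<tau> < e" by (simp add: mult.commute)
  qed
  then show "\<exists>d>0. \<exists>b>0. \<forall>y\<in>A. dist y x < d \<longrightarrow> (\<forall>\<tau>. 0 < \<tau> \<and> \<tau> < b \<longrightarrow> infdist (y + \<tau> *\<^sub>R (t *\<^sub>R h)) A / \<tau> < e)"
  proof -
    have "b / t > 0" using db t by simp
    then show ?thesis using db(1) key by blast
  qed
qed

lemma clarke_add:
  fixes A :: "'a::real_normed_vector set"
  assumes h1: "h1 \<in> clarke_tangent_cone A x" and h2: "h2 \<in> clarke_tangent_cone A x"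
    and Ane: "A \<noteq> {}"
  shows "h1 + h2 \<in> clarke_tangent_cone A x"
  unfolding clarke_iff
proof (intro allI impI)
  fix e :: real assume e: "e > 0"
  obtain d2 b2 where db2: "d2 > 0" "b2 > 0" "\<forall>y\<in>A. dist y x < d2 \<longrightarrow> (\<forall>\<tau>. 0 < \<tau> \<and> \<tau> < b2 \<longrightarrow> infdist (y + \<tau> *\<^sub>R h2) A / \<tau> < e/2)"
  proof -
    have pos: "e / 2 > 0" using e by simp
    have H: "\<forall>e>0. \<exists>d>0. \<exists>b>0. \<forall>y\<in>A. dist y x < d \<longrightarrow> (\<forall>\<tau>. 0 < \<tau> \<and> \<tau> < b \<longrightarrow> infdist (y + \<tau> *\<^sub>R h2) A / \<tau> < e)"
      using h2 unfolding clarke_iff .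
    show ?thesis using H[rule_format, OF pos] that by blast
  qed
  obtain d1 b1 where db1: "d1 > 0" "b1 > 0" "\<forall>y\<in>A. dist y x < d1 \<longrightarrow> (\<forall>\<tau>. 0 < \<tau> \<and> \<tau> < b1 \<longrightarrow> infdist (y + \<tau> *\<^sub>R h1) A / \<tau> < e/4)"
  proof -
    have pos: "e / 4 > 0" using e by simp
    have H: "\<forall>e>0. \<exists>d>0. \<exists>b>0. \<forall>y\<in>A. dist y x < d \<longrightarrow> (\<forall>\<tau>. 0 < \<tau> \<and> \<tau> < b \<longrightarrow> infdist (y + \<tau> *\<^sub>R h1) A / \<tau> < e)"
      using h1 unfolding clarke_iff .
    show ?thesis using H[rule_format, OF pos] that by blast
  qed
  define d where "d = min d1 (d2/2)"
  define b where "b = min (min b1 b2) (d2 / (2 * (e/2 + norm h1 + 1)))"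
  have d: "d > 0" using db1 db2 by (simp add: d_def)
  have b: "b > 0" using db1 db2 e unfolding b_def by (simp add: add_pos_nonneg)
  have "\<forall>y\<in>A. dist y x < d \<longrightarrow> (\<forall>\<tau>. 0 < \<tau> \<and> \<tau> < b \<longrightarrow> infdist (y + \<tau> *\<^sub>R (h1 + h2)) A / \<tau> < e)"
  proof (intro ballI impI allI)
    fix y \<tau> assume y: "y \<in> A" "dist y x < d" and \<tau>: "0 < \<tau> \<and> \<tau> < b"
    define w where "w = y + \<tau> *\<^sub>R h1"
    have "infdist w A / \<tau> < e/4" using db1(3) y \<tau> unfolding w_def d_def b_def by auto
    then have iw: "infdist w A < \<tau> * e / 4" using \<tau> by (simp add: field_simps)
    obtain z where z: "z \<in> A" "dist w z < infdist w A + \<tau> * e / 4"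
      using infdist_approx[OF Ane, of "\<tau> * e / 4" w] \<tau> e by auto
    have wz: "dist w z < \<tau> * e / 2" using z iw by simp
    have "\<tau> * (e/2 + norm h1 + 1) < d2 / 2"
    proof -
      have "\<tau> < d2 / (2 * (e/2 + norm h1 + 1))" using \<tau> unfolding b_def by simp
      moreover have "0 < e/2 + norm h1 + 1" using e by (simp add: add_pos_nonneg)
      ultimately show ?thesis by (simp add: field_simps)
    qed
    moreover have "dist w y = \<tau> * norm h1" unfolding w_def using \<tau> by (simp add: dist_norm)
    ultimately have A1: "\<tau> * e / 2 + \<tau> * norm h1 + \<tau> < d2 / 2" "dist w y = \<tau> * norm h1"
      by (simp_all add: algebra_simps)
    have "dist z x \<le> dist z w + dist w x" by (rule dist_triangle)
    moreover have "dist w x \<le> dist w y + dist y x" by (rule dist_triangle)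
    moreover have "dist z w = dist w z" by (rule dist_commute)
    moreover have "dist y x < d2 / 2" using y(2) unfolding d_def by simp
    moreover have "0 < \<tau>" using \<tau> by simp
    ultimately have "dist z x < d2" using A1 wz by linarith
    then have "infdist (z + \<tau> *\<^sub>R h2) A / \<tau> < e/2" using db2(3) z(1) \<tau> unfolding b_def by auto
    then have i2: "infdist (z + \<tau> *\<^sub>R h2) A < \<tau> * e / 2" using \<tau> by (simp add: field_simps)
    have "infdist (y + \<tau> *\<^sub>R (h1 + h2)) A \<le> infdist (z + \<tau> *\<^sub>R h2) A + dist (y + \<tau> *\<^sub>R (h1 + h2)) (z + \<tau> *\<^sub>R h2)"
      by (rule infdist_triangle)
    also have "dist (y + \<tau> *\<^sub>R (h1 + h2)) (z + \<tau> *\<^sub>R h2) = dist w z"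
      unfolding w_def dist_norm by (simp add: scaleR_add_right algebra_simps)
    finally have "infdist (y + \<tau> *\<^sub>R (h1 + h2)) A < \<tau> * e" using i2 wz by simp
    then show "infdist (y + \<tau> *\<^sub>R (h1 + h2)) A / \<tau> < e" using \<tau> by (simp add: field_simps)
  qed
  then show "\<exists>d>0. \<exists>b>0. \<forall>y\<in>A. dist y x < d \<longrightarrow> (\<forall>\<tau>. 0 < \<tau> \<and> \<tau> < b \<longrightarrow> infdist (y + \<tau> *\<^sub>R (h1 + h2)) A / \<tau> < e)"
    using d b by blast
qed

lemma clarke_dini:
  fixes A :: "'a::real_normed_vector set"
  assumes h: "h \<in> clarke_tangent_cone A x" and x: "x \<in> A"
  shows "lower_dini_dist A x h = 0"
proof -
  have "((\<lambda>\<tau>. infdist (x + \<tau> *\<^sub>R h) A / \<tau>) \<longlongrightarrow> 0) (at_right 0)"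
    unfolding tendsto_iff
  proof (intro allI impI)
    fix e :: real assume e: "e > 0"
    have H: "\<forall>e>0. \<exists>d>0. \<exists>b>0. \<forall>y\<in>A. dist y x < d \<longrightarrow> (\<forall>\<tau>. 0 < \<tau> \<and> \<tau> < b \<longrightarrow> infdist (y + \<tau> *\<^sub>R h) A / \<tau> < e)"
      using h unfolding clarke_iff .
    obtain d b where db: "d > 0" "b > 0" "\<forall>y\<in>A. dist y x < d \<longrightarrow> (\<forall>\<tau>. 0 < \<tau> \<and> \<tau> < b \<longrightarrow> infdist (y + \<tau> *\<^sub>R h) A / \<tau> < e)"
      using H[rule_format, OF e] by blast
    show "eventually (\<lambda>\<tau>. dist (infdist (x + \<tau> *\<^sub>R h) A / \<tau>) 0 < e) (at_right 0)"
      unfolding eventually_at_right_field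
    proof (intro exI[of _ b] conjI allI impI)
      show "b > 0" by (rule db(2))
      fix \<tau> :: real assume t: "0 < \<tau>" "\<tau> < b"
      then have "infdist (x + \<tau> *\<^sub>R h) A / \<tau> < e" using db(1,3) x by simp
      moreover have "0 \<le> infdist (x + \<tau> *\<^sub>R h) A / \<tau>" by (intro divide_nonneg_pos infdist_nonneg) (use t in auto)
      ultimately show "dist (infdist (x + \<tau> *\<^sub>R h) A / \<tau>) 0 < e" by (simp add: dist_real_def)
    qed
  qed
  then have "((\<lambda>\<tau>. ereal (infdist (x + \<tau> *\<^sub>R h) A / \<tau>)) \<longlongrightarrow> ereal 0) (at_right 0)"
    by simp
  then have "Liminf (at_right 0) (\<lambda>\<tau>. ereal (infdist (x + \<tau> *\<^sub>R h) A / \<tau>)) = ereal 0"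
    by (intro lim_imp_Liminf) auto
  then show ?thesis unfolding lower_dini_dist_def by (simp add: zero_ereal_def)
qed

lemma liminf_arg:
  fixes Q D :: "real \<Rightarrow> real"
  assumes Q: "(Q \<longlongrightarrow> L) (at_right 0)"
    and ev: "eventually (\<lambda>\<tau>. 0 \<le> Q \<tau> + L2 * D \<tau>) (at_right 0)"
    and D0: "eventually (\<lambda>\<tau>. 0 \<le> D \<tau>) (at_right 0)"
    and L2: "L2 > 0"
  shows "ereal L + ereal L2 * Liminf (at_right 0) (\<lambda>\<tau>. ereal (D \<tau>)) \<ge> 0"
proof (rule ccontr)
  define M where "M = Liminf (at_right 0) (\<lambda>\<tau>. ereal (D \<tau>))"
  assume neg: "\<not> ?thesis"
  have M0: "0 \<le> M" unfolding M_def
    by (rule Liminf_bounded) (use D0 in \<open>auto elim: eventually_mono simp: zero_ereal_def\<close>)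
  show False
  proof (cases M)
    case PInf
    then show False using neg L2 unfolding M_def[symmetric] by simp
  next
    case MInf
    then show False using M0 by simp
  next
    case (real m)
    have neg': "L + L2 * m < 0" using neg real unfolding M_def[symmetric] by simp
    define e where "e = - (L + L2 * m) / (2 * (1 + L2))"
    have e: "e > 0" using neg' L2 unfolding e_def by (simp add: field_simps)
    have e2: "e * (1 + L2) = - (L + L2 * m) / 2" using L2 unfolding e_def by (simp add: field_simps)
    have evQ: "eventually (\<lambda>\<tau>. Q \<tau> < L + e) (at_right 0)" using order_tendstoD(2)[OF Q] e by simp
    have "eventually (\<lambda>\<tau>. ereal (m + e) \<le> ereal (D \<tau>)) (at_right 0)"
      using evQ ev
    proof eventually_elim
      case (elim \<tau>)
      have "L2 * e > 0" using L2 e by simp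
      then have "L2 * (m + e) < L2 * D \<tau>" using e2 elim e by (simp add: algebra_simps)
      then show ?case using L2 by simp
    qed
    then have "ereal (m + e) \<le> M" unfolding M_def by (rule Liminf_bounded)
    then show False using real e by simp
  qed
qed

theorem theorem3p1:
  fixes f :: "'a::banach \<Rightarrow> ereal" and g :: "'a \<Rightarrow> 'b::banach"
    and C :: "'a set" and x0 :: 'a
    and Df :: "'a \<Rightarrow>\<^sub>L real" and Dg :: "'a \<Rightarrow>\<^sub>L 'b"
    and r Kf a s :: real
  assumes C_closed: "closed C" and C_ne: "C \<noteq> {}"
    and f_values: "\<forall>x. f x \<noteq> -\<infinity>"
    and sol: "local_solution f g C x0"
    and Hf_diff: "gateaux_at_ereal f x0 Df"
    and r_pos: "r > 0" and Kf_pos: "Kf > 0"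
    and Hf_lip: "\<forall>x\<in>cball x0 r. \<forall>x'\<in>cball x0 r. f x - f x' \<le> ereal (Kf * norm (x - x'))"
    and Hg_diff: "gateaux_at g x0 Dg"
    and a_pos: "a > 0" and s_pos: "s > 0"
    and calm: "\<forall>x\<in>cball x0 s \<inter> C. infdist x ({x. g x = 0} \<inter> C) \<le> a * norm (g x)"
  shows "(x0 \<in> interior C \<longrightarrow>
            (\<exists>ys :: 'b \<Rightarrow>\<^sub>L real. norm ys \<le> Kf * a \<and> Df + (ys o\<^sub>L Dg) = 0))
       \<and> (\<forall>Kg>0. (\<exists>\<delta>>0. \<forall>x\<in>cball x0 \<delta>. \<forall>x'\<in>cball x0 \<delta>. norm (g x - g x') \<le> Kg * norm (x - x')) \<longrightarrow>
            (\<forall>h. ereal (blinfun_apply Df h + Kf * a * norm (blinfun_apply Dg h))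
                   + ereal (Kf * (1 + Kg * a)) * lower_dini_dist C x0 h \<ge> 0)
          \<and> (\<exists>ys :: 'b \<Rightarrow>\<^sub>L real. norm ys \<le> Kf * a \<and>
               (\<exists>n\<in>clarke_normal_cone C x0. Df + (ys o\<^sub>L Dg) + n = 0))
          \<and> (convex (contingent_cone C x0) \<longrightarrow>
               (\<exists>ys :: 'b \<Rightarrow>\<^sub>L real. norm ys \<le> Kf * a \<and>
                 (\<exists>n\<in>polar_cone (contingent_cone C x0). Df + (ys o\<^sub>L Dg) + n = 0))))"
proof -
  from sol obtain \<epsilon> where x0C: "x0 \<in> C" and gx0: "g x0 = 0" and eps: "\<epsilon> > 0"
    and loc: "\<forall>x\<in>C. g x = 0 \<and> x \<in> ball x0 \<epsilon> \<longrightarrow> f x0 \<le> f x"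
    unfolding local_solution_def by blast
  define F where "F x = real_of_ereal (f x)" for x
  define c where "c = Kf * a"
  have c0: "c \<ge> 0" using Kf_pos a_pos by (simp add: c_def)
  have fx0: "f x0 = ereal (F x0)" using Hf_diff unfolding gateaux_at_ereal_def F_def by (cases "f x0") auto
  have x0b: "x0 \<in> cball x0 r" using r_pos by simp
  have fin: "f x = ereal (F x)" if "x \<in> cball x0 r" for x
  proof -
    have "f x - f x0 \<le> ereal (Kf * norm (x - x0))" using Hf_lip that x0b by blast
    then have "f x \<noteq> \<infinity>" using fx0 by auto
    moreover have "f x \<noteq> -\<infinity>" using f_values by blast
    ultimately show ?thesis unfolding F_def by (cases "f x") auto
  qed
  have FLip: "F x - F x' \<le> Kf * norm (x - x')" if "x \<in> cball x0 r" "x' \<in> cball x0 r" for x x'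
  proof -
    have "f x - f x' \<le> ereal (Kf * norm (x - x'))" using Hf_lip that by blast
    then show ?thesis using fin[OF that(1)] fin[OF that(2)] by simp
  qed
  have Fsol: "F x0 \<le> F x" if "x \<in> C" "g x = 0" "x \<in> ball x0 \<epsilon>" "x \<in> cball x0 r" for x
  proof -
    have "f x0 \<le> f x" using loc that by blast
    then show ?thesis using fin[OF that(4)] fx0 by simp
  qed
  define \<delta> where "\<delta> = min s (min (\<epsilon>/3) (r/3))"
  have \<delta>pos: "\<delta> > 0" using s_pos eps r_pos by (simp add: \<delta>_def)
  have \<delta>le: "\<delta> \<le> s" "\<delta> \<le> \<epsilon>/3" "\<delta> \<le> r/3" by (simp_all add: \<delta>_def)
  have pen: "F x0 \<le> F x + c * norm (g x)" if xC: "x \<in> C" and xb: "dist x0 x < \<delta>" for x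
  proof (rule field_le_epsilon)
    fix e :: real assume e: "e > 0"
    define \<eta> where "\<eta> = min (\<delta>/2) (e/Kf)"
    have \<eta>: "\<eta> > 0" "\<eta> \<le> \<delta>/2" using \<delta>pos e Kf_pos unfolding \<eta>_def by (simp_all only: min_le_iff_disj) auto
    have "\<eta> \<le> e / Kf" by (simp add: \<eta>_def)
    then have \<eta>e: "Kf * \<eta> \<le> e" using Kf_pos by (simp add: field_simps)
    define Z where "Z = {x. g x = 0} \<inter> C"
    have x0Z: "x0 \<in> Z" using gx0 x0C by (simp add: Z_def)
    then have Zne: "Z \<noteq> {}" by blast
    obtain z where zZ: "z \<in> Z" and zd: "dist x z < infdist x Z + \<eta>"
      using infdist_approx[OF Zne \<eta>(1)] by blast
    have "x \<in> cball x0 s \<inter> C" using xC xb \<delta>le by simp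
    then have cl: "infdist x Z \<le> a * norm (g x)" using calm unfolding Z_def by blast
    have "infdist x Z \<le> dist x x0" using infdist_le[OF x0Z] .
    moreover have "dist x0 z \<le> dist x0 x + dist x z" by (rule dist_triangle)
    ultimately have "dist x0 z < 3 * \<delta>" using xb zd \<eta> by (simp add: dist_commute)
    then have zb: "z \<in> ball x0 \<epsilon>" "z \<in> cball x0 r" using \<delta>le by auto
    have xr: "x \<in> cball x0 r" using xb \<delta>le \<delta>pos by simp
    have "F x0 \<le> F z" using Fsol zZ zb unfolding Z_def by blast
    moreover have "F z - F x \<le> Kf * norm (z - x)" using FLip zb(2) xr by blast
    moreover have "norm (z - x) = dist x z" by (simp add: dist_norm norm_minus_commute)
    moreover have "Kf * dist x z \<le> Kf * (a * norm (g x) + \<eta>)"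
      using zd cl Kf_pos by (intro mult_left_mono) auto
    ultimately show "F x0 \<le> F x + c * norm (g x) + e"
      using \<eta>e unfolding c_def by (simp add: algebra_simps)
  qed
  define L where "L h = blinfun_apply Df h + c * norm (blinfun_apply Dg h)" for h
  define Q where "Q h \<tau> = (F (x0 + \<tau> *\<^sub>R h) - F x0) / \<tau> + c * (norm (g (x0 + \<tau> *\<^sub>R h)) / \<tau>)" for h \<tau>
  have small: "\<exists>b>0. \<forall>\<tau>. 0 < \<tau> \<and> \<tau> < b \<longrightarrow> dist x0 (x0 + \<tau> *\<^sub>R h) < \<rho>" if "\<rho> > 0" for \<rho> h
  proof (intro exI[of _ "\<rho> / (norm h + 1)"] conjI allI impI)
    have nh: "0 < norm h + 1" using norm_ge_zero[of h] by linarith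
    then show "0 < \<rho> / (norm h + 1)" using that by simp
    fix \<tau> :: real assume t: "0 < \<tau> \<and> \<tau> < \<rho> / (norm h + 1)"
    then have "\<tau> * (norm h + 1) < \<rho>" using nh by (simp add: field_simps)
    then have "\<tau> * norm h < \<rho>" using t by (simp add: algebra_simps)
    then show "dist x0 (x0 + \<tau> *\<^sub>R h) < \<rho>" using t by (simp add: dist_norm)
  qed
  have qf: "((\<lambda>\<tau>. (F (x0 + \<tau> *\<^sub>R h) - F x0) / \<tau>) \<longlongrightarrow> blinfun_apply Df h) (at_right 0)" for h
  proof -
    have lim: "((\<lambda>\<tau>. (f (x0 + \<tau> *\<^sub>R h) - f x0) / ereal \<tau>) \<longlongrightarrow> ereal (blinfun_apply Df h)) (at_right 0)"
      using Hf_diff unfolding gateaux_at_ereal_def by blast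
    obtain b where b: "b > 0" "\<forall>\<tau>. 0 < \<tau> \<and> \<tau> < b \<longrightarrow> dist x0 (x0 + \<tau> *\<^sub>R h) < r"
      using small[OF r_pos] by blast
    have ev: "eventually (\<lambda>\<tau>. (f (x0 + \<tau> *\<^sub>R h) - f x0) / ereal \<tau> = ereal ((F (x0 + \<tau> *\<^sub>R h) - F x0) / \<tau>)) (at_right 0)"
      unfolding eventually_at_right_field
    proof (intro exI[of _ b] conjI allI impI)
      show "0 < b" by (rule b(1))
      fix \<tau> :: real assume t: "0 < \<tau>" "\<tau> < b"
      then have "x0 + \<tau> *\<^sub>R h \<in> cball x0 r" using b(2) by fastforce
      then show "(f (x0 + \<tau> *\<^sub>R h) - f x0) / ereal \<tau> = ereal ((F (x0 + \<tau> *\<^sub>R h) - F x0) / \<tau>)"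
        using fin fx0 t by simp
    qed
    show ?thesis using lim tendsto_cong[OF ev] by simp
  qed
  have qg: "((\<lambda>\<tau>. norm (g (x0 + \<tau> *\<^sub>R h)) / \<tau>) \<longlongrightarrow> norm (blinfun_apply Dg h)) (at_right 0)" for h
  proof -
    have "((\<lambda>\<tau>. (g (x0 + \<tau> *\<^sub>R h) - g x0) /\<^sub>R \<tau>) \<longlongrightarrow> blinfun_apply Dg h) (at_right 0)"
      using Hg_diff unfolding gateaux_at_def by blast
    then have lim: "((\<lambda>\<tau>. norm ((g (x0 + \<tau> *\<^sub>R h) - g x0) /\<^sub>R \<tau>)) \<longlongrightarrow> norm (blinfun_apply Dg h)) (at_right 0)"
      by (rule tendsto_norm)
    have ev: "eventually (\<lambda>\<tau>. norm ((g (x0 + \<tau> *\<^sub>R h) - g x0) /\<^sub>R \<tau>) = norm (g (x0 + \<tau> *\<^sub>R h)) / \<tau>) (at_right 0)"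
      using eventually_at_right_less[of "0::real"] by eventually_elim (simp add: gx0 divide_inverse_commute)
    show ?thesis using lim tendsto_cong[OF ev] by simp
  qed
  have qL: "(Q h \<longlongrightarrow> L h) (at_right 0)" for h
    unfolding L_def Q_def by (intro tendsto_add tendsto_mult_left qf qg)
  have Qeq: "Q h \<tau> = (F (x0 + \<tau> *\<^sub>R h) - F x0 + c * norm (g (x0 + \<tau> *\<^sub>R h))) / \<tau>" if "\<tau> > 0" for h \<tau>
    unfolding Q_def using that by (simp add: field_simps)
  have part1: "x0 \<in> interior C \<longrightarrow>
            (\<exists>ys :: 'b \<Rightarrow>\<^sub>L real. norm ys \<le> Kf * a \<and> Df + (ys o\<^sub>L Dg) = 0)"
  proof
    assume "x0 \<in> interior C"
    then obtain \<rho> where \<rho>: "\<rho> > 0" "ball x0 \<rho> \<subseteq> C" using mem_interior by blast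
    have Lnn: "L h \<ge> 0" for h
    proof (rule tendsto_lowerbound[OF qL])
      show "\<not> trivial_limit (at_right (0::real))" by simp
      obtain b where b: "b > 0" "\<forall>\<tau>. 0 < \<tau> \<and> \<tau> < b \<longrightarrow> dist x0 (x0 + \<tau> *\<^sub>R h) < min \<delta> \<rho>"
        using small[of "min \<delta> \<rho>" h] \<rho> \<delta>pos by auto
      show "eventually (\<lambda>\<tau>. 0 \<le> Q h \<tau>) (at_right 0)"
        unfolding eventually_at_right_field
      proof (intro exI[of _ b] conjI allI impI)
        show "0 < b" by (rule b(1))
        fix \<tau> :: real assume t: "0 < \<tau>" "\<tau> < b"
        then have d: "dist x0 (x0 + \<tau> *\<^sub>R h) < min \<delta> \<rho>" using b(2) by blast
        then have "x0 + \<tau> *\<^sub>R h \<in> C" using \<rho> by auto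
        then have "F x0 \<le> F (x0 + \<tau> *\<^sub>R h) + c * norm (g (x0 + \<tau> *\<^sub>R h))" using pen d by auto
        then show "0 \<le> Q h \<tau>" using t by (simp add: Qeq)
      qed
    qed
    obtain ys :: "'b \<Rightarrow>\<^sub>L real" where ys: "norm ys \<le> c"
      "\<forall>h\<in>UNIV. blinfun_apply Df h + blinfun_apply ys (blinfun_apply Dg h) \<ge> 0"
      using dual_cone_ext[OF c0, where K=UNIV and A=Dg and \<phi>=Df] Lnn unfolding L_def by auto
    have "Df + (ys o\<^sub>L Dg) = 0"
    proof (rule blinfun_eqI)
      fix h
      have "blinfun_apply Df h + blinfun_apply ys (blinfun_apply Dg h) \<ge> 0"
        "blinfun_apply Df (-h) + blinfun_apply ys (blinfun_apply Dg (-h)) \<ge> 0" using ys by auto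
      then have "blinfun_apply Df h + blinfun_apply ys (blinfun_apply Dg h) = 0"
        by (simp add: blinfun.minus_right)
      then show "blinfun_apply (Df + (ys o\<^sub>L Dg)) h = blinfun_apply 0 h" by (simp add: plus_blinfun.rep_eq)
    qed
    then show "\<exists>ys :: 'b \<Rightarrow>\<^sub>L real. norm ys \<le> Kf * a \<and> Df + (ys o\<^sub>L Dg) = 0"
      using ys(1) unfolding c_def by blast
  qed
  have part2: "\<forall>Kg>0. (\<exists>\<delta>>0. \<forall>x\<in>cball x0 \<delta>. \<forall>x'\<in>cball x0 \<delta>. norm (g x - g x') \<le> Kg * norm (x - x')) \<longrightarrow>
            (\<forall>h. ereal (blinfun_apply Df h + Kf * a * norm (blinfun_apply Dg h))
                   + ereal (Kf * (1 + Kg * a)) * lower_dini_dist C x0 h \<ge> 0)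
          \<and> (\<exists>ys :: 'b \<Rightarrow>\<^sub>L real. norm ys \<le> Kf * a \<and>
               (\<exists>n\<in>clarke_normal_cone C x0. Df + (ys o\<^sub>L Dg) + n = 0))
          \<and> (convex (contingent_cone C x0) \<longrightarrow>
               (\<exists>ys :: 'b \<Rightarrow>\<^sub>L real. norm ys \<le> Kf * a \<and>
                 (\<exists>n\<in>polar_cone (contingent_cone C x0). Df + (ys o\<^sub>L Dg) + n = 0)))"
  proof (rule allI, rule impI, rule impI, intro conjI)
    fix Kg :: real assume Kg: "Kg > 0"
      and "\<exists>\<delta>>0. \<forall>x\<in>cball x0 \<delta>. \<forall>x'\<in>cball x0 \<delta>. norm (g x - g x') \<le> Kg * norm (x - x')"
    then obtain \<delta>g where \<delta>g: "\<delta>g > 0" "\<forall>x\<in>cball x0 \<delta>g. \<forall>x'\<in>cball x0 \<delta>g. norm (g x - g x') \<le> Kg * norm (x - x')"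
      by blast
    define L2 where "L2 = Kf * (1 + Kg * a)"
    have L2: "L2 > 0" using Kf_pos Kg a_pos unfolding L2_def by (simp add: add_pos_pos)
    define \<delta>' where "\<delta>' = min (\<delta>/3) (\<delta>g/3)"
    have \<delta>'pos: "\<delta>' > 0" using \<delta>pos \<delta>g by (simp add: \<delta>'_def)
    have pen2: "F x0 \<le> F x + c * norm (g x) + L2 * infdist x C" if xb: "dist x0 x < \<delta>'" for x
    proof (rule field_le_epsilon)
      fix e :: real assume e: "e > 0"
      define \<eta> where "\<eta> = min (min (\<delta>/3) (\<delta>g/3)) (e/L2)"
      have \<eta>: "\<eta> > 0" "\<eta> \<le> \<delta>/3" "\<eta> \<le> \<delta>g/3" using \<delta>pos \<delta>g e L2 unfolding \<eta>_def by (simp_all only: min_le_iff_disj) auto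
      have "\<eta> \<le> e / L2" by (simp add: \<eta>_def)
      then have \<eta>e: "L2 * \<eta> \<le> e" using L2 by (simp add: field_simps)
      obtain w where w: "w \<in> C" "dist x w < infdist x C + \<eta>"
        using infdist_approx[OF C_ne \<eta>(1)] by blast
      have "infdist x C \<le> dist x x0" using infdist_le[OF x0C] .
      moreover have "dist x0 w \<le> dist x0 x + dist x w" by (rule dist_triangle)
      moreover have "\<delta>' \<le> \<delta>/3" "\<delta>' \<le> \<delta>g/3" by (simp_all add: \<delta>'_def)
      ultimately have dw: "dist x0 w < \<delta>" "dist x0 w < \<delta>g" using xb w(2) \<eta> by (simp_all add: dist_commute)
      have xr: "x \<in> cball x0 r" "w \<in> cball x0 r" using xb dw \<delta>le \<open>\<delta>' \<le> \<delta>/3\<close> \<delta>pos r_pos by simp_all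
      have xg: "x \<in> cball x0 \<delta>g" "w \<in> cball x0 \<delta>g" using xb dw \<open>\<delta>' \<le> \<delta>g/3\<close> \<delta>g \<delta>'pos by simp_all
      define nwx where "nwx = norm (w - x)"
      have nwx: "nwx = dist x w" unfolding nwx_def by (simp add: dist_norm norm_minus_commute)
      have 1: "F x0 \<le> F w + c * norm (g w)" using pen[OF w(1) dw(1)] .
      have 2: "F w - F x \<le> Kf * nwx" using FLip xr unfolding nwx_def by blast
      have "norm (g w - g x) \<le> Kg * nwx" using \<delta>g(2) xg unfolding nwx_def by blast
      then have "norm (g w) \<le> norm (g x) + Kg * nwx" using norm_triangle_sub[of "g w" "g x"] by linarith
      then have 3: "c * norm (g w) \<le> c * norm (g x) + c * (Kg * nwx)"
      proof -
        have "c * norm (g w) \<le> c * (norm (g x) + Kg * nwx)" using mult_left_mono[OF _ c0] \<open>norm (g w) \<le> _\<close> by blast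
        then show ?thesis by (simp add: algebra_simps)
      qed
      have 4: "L2 * nwx = Kf * nwx + c * (Kg * nwx)" unfolding L2_def c_def by (simp add: algebra_simps)
      have 5: "L2 * nwx \<le> L2 * (infdist x C + \<eta>)" using w(2) nwx L2 by simp
      show "F x0 \<le> F x + c * norm (g x) + L2 * infdist x C + e"
        using 1 2 3 4 5 \<eta>e by (simp add: algebra_simps)
    qed
    have ineq: "ereal (L h) + ereal L2 * lower_dini_dist C x0 h \<ge> 0" for h
      unfolding lower_dini_dist_def
    proof (rule liminf_arg[where D="\<lambda>\<tau>. infdist (x0 + \<tau> *\<^sub>R h) C / \<tau>", OF qL _ _ L2])
      obtain b where b: "b > 0" "\<forall>\<tau>. 0 < \<tau> \<and> \<tau> < b \<longrightarrow> dist x0 (x0 + \<tau> *\<^sub>R h) < \<delta>'"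
        using small[OF \<delta>'pos] by blast
      show "eventually (\<lambda>\<tau>. 0 \<le> Q h \<tau> + L2 * (infdist (x0 + \<tau> *\<^sub>R h) C / \<tau>)) (at_right 0)"
        unfolding eventually_at_right_field
      proof (intro exI[of _ b] conjI allI impI)
        show "0 < b" by (rule b(1))
        fix \<tau> :: real assume t: "0 < \<tau>" "\<tau> < b"
        then have "F x0 \<le> F (x0 + \<tau> *\<^sub>R h) + c * norm (g (x0 + \<tau> *\<^sub>R h)) + L2 * infdist (x0 + \<tau> *\<^sub>R h) C"
          using pen2 b(2) by blast
        then have "0 \<le> (F (x0 + \<tau> *\<^sub>R h) - F x0 + c * norm (g (x0 + \<tau> *\<^sub>R h)) + L2 * infdist (x0 + \<tau> *\<^sub>R h) C) / \<tau>"
          using t by simp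
        also have "\<dots> = Q h \<tau> + L2 * (infdist (x0 + \<tau> *\<^sub>R h) C / \<tau>)"
          using t by (simp add: Qeq add_divide_distrib)
        finally show "0 \<le> Q h \<tau> + L2 * (infdist (x0 + \<tau> *\<^sub>R h) C / \<tau>)" .
      qed
      show "eventually (\<lambda>\<tau>. 0 \<le> infdist (x0 + \<tau> *\<^sub>R h) C / \<tau>) (at_right 0)"
        using eventually_at_right_less[of "0::real"]
        by eventually_elim (intro divide_nonneg_pos infdist_nonneg, auto)
    qed
    have Lcont: "L h \<ge> 0" if "lower_dini_dist C x0 h = 0" for h
      using ineq[of h] that by simp
    show "(\<forall>h. ereal (blinfun_apply Df h + Kf * a * norm (blinfun_apply Dg h))
                   + ereal (Kf * (1 + Kg * a)) * lower_dini_dist C x0 h \<ge> 0)"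
      using ineq unfolding L_def c_def L2_def by simp
    show "\<exists>ys :: 'b \<Rightarrow>\<^sub>L real. norm ys \<le> Kf * a \<and>
               (\<exists>n\<in>clarke_normal_cone C x0. Df + (ys o\<^sub>L Dg) + n = 0)"
    proof -
      let ?T = "clarke_tangent_cone C x0"
      have "\<exists>ys::'b \<Rightarrow>\<^sub>L real. norm ys \<le> c \<and> (\<forall>h\<in>?T. blinfun_apply Df h + blinfun_apply ys (blinfun_apply Dg h) \<ge> 0)"
      proof (rule dual_cone_ext[OF c0])
        show "0 \<in> ?T" by (rule clarke_zero)
        show "h1 + h2 \<in> ?T" if "h1 \<in> ?T" "h2 \<in> ?T" for h1 h2 using clarke_add[OF that C_ne] .
        show "t *\<^sub>R h \<in> ?T" if "t > 0" "h \<in> ?T" for t h using clarke_scale[OF that(2) that(1)] .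
        show "blinfun_apply Df h + c * norm (blinfun_apply Dg h) \<ge> 0" if "h \<in> ?T" for h
          using Lcont[OF clarke_dini[OF that x0C]] unfolding L_def .
      qed
      then obtain ys :: "'b \<Rightarrow>\<^sub>L real" where ys: "norm ys \<le> c"
        "\<forall>h\<in>?T. blinfun_apply Df h + blinfun_apply ys (blinfun_apply Dg h) \<ge> 0" by blast
      define n where "n = - (Df + (ys o\<^sub>L Dg))"
      have "\<forall>h\<in>?T. blinfun_apply n h \<le> 0"
      proof
        fix h assume "h \<in> ?T"
        then have "0 \<le> blinfun_apply Df h + blinfun_apply ys (blinfun_apply Dg h)" using ys(2) by blast
        then show "blinfun_apply n h \<le> 0" unfolding n_def by (simp add: plus_blinfun.rep_eq uminus_blinfun.rep_eq minus_blinfun.rep_eq)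
      qed
      then have "n \<in> clarke_normal_cone C x0"
        unfolding clarke_normal_cone_def polar_cone_def by blast
      moreover have "Df + (ys o\<^sub>L Dg) + n = 0" unfolding n_def by simp
      ultimately show ?thesis using ys(1) unfolding c_def by blast
    qed
    show "convex (contingent_cone C x0) \<longrightarrow>
               (\<exists>ys :: 'b \<Rightarrow>\<^sub>L real. norm ys \<le> Kf * a \<and>
                 (\<exists>n\<in>polar_cone (contingent_cone C x0). Df + (ys o\<^sub>L Dg) + n = 0))"
    proof
      assume cvx: "convex (contingent_cone C x0)"
      let ?K = "contingent_cone C x0"
      define K' where "K' = {t *\<^sub>R h | t h. t \<ge> 0 \<and> h \<in> ?K}"
      have KK': "h \<in> K'" if "h \<in> ?K" for h
      proof -
        have "h = (1::real) *\<^sub>R h \<and> (1::real) \<ge> 0 \<and> h \<in> ?K" using that by simp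
        then show ?thesis unfolding K'_def by blast
      qed
      have K0: "0 \<in> ?K" using clarke_dini[OF clarke_zero x0C] unfolding contingent_cone_def by simp
      have LK: "L h \<ge> 0" if "h \<in> ?K" for h using Lcont that unfolding contingent_cone_def by simp
      have "\<exists>ys::'b \<Rightarrow>\<^sub>L real. norm ys \<le> c \<and> (\<forall>h\<in>K'. blinfun_apply Df h + blinfun_apply ys (blinfun_apply Dg h) \<ge> 0)"
      proof (rule dual_cone_ext[OF c0])
        show "0 \<in> K'" using KK'[OF K0] .
        show "x + y \<in> K'" if xy: "x \<in> K'" "y \<in> K'" for x y
        proof -
          obtain t1 h1 where 1: "x = t1 *\<^sub>R h1" "t1 \<ge> 0" "h1 \<in> ?K" using xy(1) unfolding K'_def by blast
          obtain t2 h2 where 2: "y = t2 *\<^sub>R h2" "t2 \<ge> 0" "h2 \<in> ?K" using xy(2) unfolding K'_def by blast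
          show ?thesis
          proof (cases "t1 + t2 = 0")
            case True
            then have "t1 = 0" "t2 = 0" using 1 2 by auto
            then have "x + y = 0" using 1 2 by simp
            then show ?thesis using KK'[OF K0] by simp
          next
            case False
            then have s: "t1 + t2 > 0" using 1 2 by linarith
            have "t1/(t1+t2) + t2/(t1+t2) = (t1+t2)/(t1+t2)" by (rule add_divide_distrib[symmetric])
            then have u: "t1/(t1+t2) + t2/(t1+t2) = 1" using s by simp
            have inK: "(t1/(t1+t2)) *\<^sub>R h1 + (t2/(t1+t2)) *\<^sub>R h2 \<in> ?K"
              using cvx 1 2 s u by (intro convexD) auto
            have "x + y = (t1+t2) *\<^sub>R ((t1/(t1+t2)) *\<^sub>R h1 + (t2/(t1+t2)) *\<^sub>R h2)"
              using 1 2 s by (simp add: scaleR_add_right)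
            moreover have "t1 + t2 \<ge> 0" using s by simp
            ultimately show ?thesis using inK unfolding K'_def by blast
          qed
        qed
        show "t *\<^sub>R h \<in> K'" if th: "t > 0" "h \<in> K'" for t h
        proof -
          obtain t1 h1 where 1: "h = t1 *\<^sub>R h1" "t1 \<ge> 0" "h1 \<in> ?K" using th(2) unfolding K'_def by blast
          then have "t *\<^sub>R h = (t * t1) *\<^sub>R h1 \<and> t * t1 \<ge> 0 \<and> h1 \<in> ?K" using th(1) by simp
          then show ?thesis unfolding K'_def by blast
        qed
        show "blinfun_apply Df h + c * norm (blinfun_apply Dg h) \<ge> 0" if hK: "h \<in> K'" for h
        proof -
          obtain t1 h1 where 1: "h = t1 *\<^sub>R h1" "t1 \<ge> 0" "h1 \<in> ?K" using hK unfolding K'_def by blast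
          have "blinfun_apply Df h + c * norm (blinfun_apply Dg h) = t1 * L h1"
            unfolding L_def 1(1) using 1(2) by (simp add: blinfun.scaleR_right algebra_simps)
          then show ?thesis using LK[OF 1(3)] 1(2) by simp
        qed
      qed
      then obtain ys :: "'b \<Rightarrow>\<^sub>L real" where ys: "norm ys \<le> c"
        "\<forall>h\<in>K'. blinfun_apply Df h + blinfun_apply ys (blinfun_apply Dg h) \<ge> 0" by blast
      define n where "n = - (Df + (ys o\<^sub>L Dg))"
      have "\<forall>h\<in>?K. blinfun_apply n h \<le> 0"
      proof
        fix h assume "h \<in> ?K"
        then have "0 \<le> blinfun_apply Df h + blinfun_apply ys (blinfun_apply Dg h)" using ys(2) KK' by blast
        then show "blinfun_apply n h \<le> 0" unfolding n_def by (simp add: plus_blinfun.rep_eq uminus_blinfun.rep_eq minus_blinfun.rep_eq)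
      qed
      then have "n \<in> polar_cone ?K"
        unfolding polar_cone_def by blast
      moreover have "Df + (ys o\<^sub>L Dg) + n = 0" unfolding n_def by simp
      ultimately show "\<exists>ys :: 'b \<Rightarrow>\<^sub>L real. norm ys \<le> Kf * a \<and>
                 (\<exists>n\<in>polar_cone (contingent_cone C x0). Df + (ys o\<^sub>L Dg) + n = 0)"
        using ys(1) unfolding c_def by blast
    qed
  qed
  show ?thesis using part1 part2 by blast
qed

end
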